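(* For every integer $n\ge 1$, the number of Dumont permutations of the second kind of length $2n$ that avoid the pattern $231$ is $2^{n-1}$, i.e. $|\mathfrak D^2_{2n}(231)|=2^{n-1}$.
   Context: A Dumont permutation of the second kind of length $2n$ is a permutation $\pi\in\mathfrak S_{2n}$ such that for every $i=1,\dots,n$ one has $\pi(2i)<2i$ and $\pi(2i-1)\ge 2i-1$ (entries at even positions are deficiencies, entries at odd positions are fixed points or excedances). $\mathfrak D^2_{2n}$ denotes the set of these. A permutation $\sigma$ contains a pattern $\tau\in\mathfrak S_k$ if some subsequence $(\sigma(i_1),\dots,\sigma(i_k))$, $i_1<\dots<i_k$, is order-isomorphic to $\tau$; otherwise $\sigma$ avoids $\tau$. $\mathfrak D^2_{2n}(T)$ denotes the set of permutations in $\mathfrak D^2_{2n}$ avoiding every pattern in $T$. *)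

theory Defs
  imports "HOL-Combinatorics.Permutations"
begin

text \<open>Permutations of length m are bijections \<open>\<sigma>\<close> with \<open>\<sigma> permutes {1..m}\<close>
  (positions and values both in 1..m). A pattern \<open>\<tau>\<close> of length k is likewise
  a permutation of {1..k}.\<close>

definition contains_pattern :: "(nat \<Rightarrow> nat) \<Rightarrow> nat \<Rightarrow> (nat \<Rightarrow> nat) \<Rightarrow> nat \<Rightarrow> bool" where
  "contains_pattern \<sigma> m \<tau> k \<longleftrightarrow>
     (\<exists>ix :: nat \<Rightarrow> nat. strict_mono_on {1..k} ix \<and> ix ` {1..k} \<subseteq> {1..m} \<and>
        (\<forall>a\<in>{1..k}. \<forall>b\<in>{1..k}. \<sigma> (ix a) < \<sigma> (ix b) \<longleftrightarrow> \<tau> a < \<tau> b))"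

definition avoids_pattern :: "(nat \<Rightarrow> nat) \<Rightarrow> nat \<Rightarrow> (nat \<Rightarrow> nat) \<Rightarrow> nat \<Rightarrow> bool" where
  "avoids_pattern \<sigma> m \<tau> k \<longleftrightarrow> \<not> contains_pattern \<sigma> m \<tau> k"

definition dumont2 :: "nat \<Rightarrow> (nat \<Rightarrow> nat) set" where
  "dumont2 n = {\<pi>. \<pi> permutes {1..2*n} \<and>
     (\<forall>i\<in>{1..n}. \<pi> (2*i) < 2*i \<and> \<pi> (2*i - 1) \<ge> 2*i - 1)}"

definition pat231 :: "nat \<Rightarrow> nat" where
  "pat231 = (\<lambda>x. if x = 1 then 2 else if x = 2 then 3 else if x = 3 then 1 else x)"

end

theory Submission
  imports Defs
begin

lemma perm_iff:
  assumes "finite S"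
  shows "p permutes S \<longleftrightarrow> (\<forall>x. x \<notin> S \<longrightarrow> p x = x) \<and> p ` S \<subseteq> S \<and> inj_on p S"
proof
  assume "p permutes S"
  then show "(\<forall>x. x \<notin> S \<longrightarrow> p x = x) \<and> p ` S \<subseteq> S \<and> inj_on p S"
    by (simp add: permutes_not_in permutes_image permutes_inj_on)
next
  assume h: "(\<forall>x. x \<notin> S \<longrightarrow> p x = x) \<and> p ` S \<subseteq> S \<and> inj_on p S"
  then have "p ` S = S" using endo_inj_surj[OF assms] by blast
  then have "bij_betw p S S" using h by (simp add: bij_betw_def)
  then show "p permutes S" using h by (intro bij_imp_permutes) auto
qed

definition D :: "nat \<Rightarrow> (nat \<Rightarrow> nat) \<Rightarrow> bool" where
  "D m \<pi> \<longleftrightarrow> \<pi> permutes {1..m} \<and> (\<forall>x\<in>{1..m}. (even x \<longrightarrow> \<pi> x < x) \<and> (odd x \<longrightarrow> x \<le> \<pi> x))"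

definition av :: "nat \<Rightarrow> (nat \<Rightarrow> nat) \<Rightarrow> bool" where
  "av m \<pi> \<longleftrightarrow> (\<forall>i j k. 1 \<le> i \<longrightarrow> i < j \<longrightarrow> j < k \<longrightarrow> k \<le> m \<longrightarrow> \<not> (\<pi> k < \<pi> i \<and> \<pi> i < \<pi> j))"

definition B :: "nat \<Rightarrow> (nat \<Rightarrow> nat) set" where
  "B m = {\<pi>. D m \<pi> \<and> av m \<pi>}"

lemma dumont_eq: "dumont2 n = {\<pi>. D (2*n) \<pi>}"
proof -
  have "(\<forall>i\<in>{1..n}. \<pi> (2*i) < 2*i \<and> \<pi> (2*i - 1) \<ge> 2*i - 1) \<longleftrightarrow>
        (\<forall>x\<in>{1..2*n}. (even x \<longrightarrow> \<pi> x < x) \<and> (odd x \<longrightarrow> x \<le> \<pi> x))" for \<pi> :: "nat \<Rightarrow> nat"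
  proof
    assume h: "\<forall>i\<in>{1..n}. \<pi> (2*i) < 2*i \<and> \<pi> (2*i - 1) \<ge> 2*i - 1"
    show "\<forall>x\<in>{1..2*n}. (even x \<longrightarrow> \<pi> x < x) \<and> (odd x \<longrightarrow> x \<le> \<pi> x)"
    proof (intro ballI conjI impI)
      fix x assume x: "x \<in> {1..2*n}"
      { assume "even x" then obtain i where i: "x = 2*i" by (auto elim: evenE)
        with x have "i \<in> {1..n}" by auto
        with h i show "\<pi> x < x" by auto }
      { assume "odd x" then obtain i where i: "x = 2*i+1" by (auto elim: oddE)
        with x have "i+1 \<in> {1..n}" by auto
        with h i have "\<pi> (2*(i+1) - 1) \<ge> 2*(i+1) - 1" by blast
        with i show "x \<le> \<pi> x" by simp }
    qed
  next
    assume h: "\<forall>x\<in>{1..2*n}. (even x \<longrightarrow> \<pi> x < x) \<and> (odd x \<longrightarrow> x \<le> \<pi> x)"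
    show "\<forall>i\<in>{1..n}. \<pi> (2*i) < 2*i \<and> \<pi> (2*i - 1) \<ge> 2*i - 1"
    proof
      fix i assume i: "i \<in> {1..n}"
      have "2*i \<in> {1..2*n}" "2*i - 1 \<in> {1..2*n}" "odd (2*i - 1)" using i by auto
      with h show "\<pi> (2*i) < 2*i \<and> \<pi> (2*i - 1) \<ge> 2*i - 1" by auto
    qed
  qed
  then show ?thesis unfolding dumont2_def D_def by auto
qed

lemma mem3: "(a::nat) \<in> {1..3} \<longleftrightarrow> a = 1 \<or> a = 2 \<or> a = 3" by auto

lemma avoid_eq: "avoids_pattern \<pi> m pat231 3 \<longleftrightarrow> av m \<pi>"
proof
  assume a: "avoids_pattern \<pi> m pat231 3"
  show "av m \<pi>" unfolding av_def
  proof (intro allI impI notI)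
    fix i j k assume h: "1 \<le> i" "i < j" "j < k" "k \<le> m" "\<pi> k < \<pi> i \<and> \<pi> i < \<pi> j"
    define ix where "ix = (\<lambda>a::nat. if a = 1 then i else if a = 2 then j else k)"
    have "strict_mono_on {1..3} ix" unfolding strict_mono_on_def mem3 ix_def using h by auto
    moreover have "ix ` {1..3} \<subseteq> {1..m}" unfolding ix_def using h by auto
    moreover have "\<forall>a\<in>{1..3}. \<forall>b\<in>{1..3}. \<pi> (ix a) < \<pi> (ix b) \<longleftrightarrow> pat231 a < pat231 b"
      unfolding mem3 ix_def pat231_def using h by auto
    ultimately have "contains_pattern \<pi> m pat231 3" unfolding contains_pattern_def by blast
    with a show False unfolding avoids_pattern_def by blast
  qed
next
  assume a: "av m \<pi>"
  show "avoids_pattern \<pi> m pat231 3" unfolding avoids_pattern_def contains_pattern_def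
  proof
    assume "\<exists>ix. strict_mono_on {1..3} ix \<and> ix ` {1..3} \<subseteq> {1..m} \<and>
        (\<forall>a\<in>{1..3}. \<forall>b\<in>{1..3}. \<pi> (ix a) < \<pi> (ix b) \<longleftrightarrow> pat231 a < pat231 b)"
    then obtain ix where s: "strict_mono_on {1..3} ix" and im: "ix ` {1..3} \<subseteq> {1..m}"
      and c: "\<forall>a\<in>{1..3}. \<forall>b\<in>{1..3}. \<pi> (ix a) < \<pi> (ix b) \<longleftrightarrow> pat231 a < pat231 b" by blast
    have "ix 1 < ix 2" "ix 2 < ix 3" using s unfolding strict_mono_on_def by auto
    moreover have "ix 1 \<in> {1..m}" "ix 3 \<in> {1..m}" using im by (simp_all add: image_subset_iff)
    moreover have "1 \<le> ix 1" "ix 3 \<le> m" using calculation(3,4) by auto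
    moreover have "\<pi> (ix 3) < \<pi> (ix 1)" "\<pi> (ix 1) < \<pi> (ix 2)" using c by (auto simp: pat231_def)
    ultimately show False using a unfolding av_def by blast
  qed
qed

definition ext1 :: "nat \<Rightarrow> (nat \<Rightarrow> nat) \<Rightarrow> nat \<Rightarrow> nat" where
  "ext1 m \<sigma> = \<sigma>(m+1 := m+2, m+2 := m+1)"
definition ext2 :: "nat \<Rightarrow> (nat \<Rightarrow> nat) \<Rightarrow> nat \<Rightarrow> nat" where
  "ext2 m \<sigma> = (\<lambda>x. if x = m+1 then m+1 else if x = m+2 then m else if \<sigma> x = m then m+2 else \<sigma> x)"
definition red1 :: "nat \<Rightarrow> (nat \<Rightarrow> nat) \<Rightarrow> nat \<Rightarrow> nat" where
  "red1 m \<pi> = \<pi>(m+1 := m+1, m+2 := m+2)"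
definition red2 :: "nat \<Rightarrow> (nat \<Rightarrow> nat) \<Rightarrow> nat \<Rightarrow> nat" where
  "red2 m \<pi> = (\<lambda>x. if x = m+1 then m+1 else if x = m+2 then m+2 else if \<pi> x = m+2 then m else \<pi> x)"

lemma Bfacts:
  assumes "\<pi> \<in> B m"
  shows "\<And>x. x \<in> {1..m} \<Longrightarrow> \<pi> x \<in> {1..m}"
    and "\<And>x. x \<notin> {1..m} \<Longrightarrow> \<pi> x = x"
    and "inj_on \<pi> {1..m}"
    and "\<And>x y. x \<in> {1..m} \<Longrightarrow> y \<in> {1..m} \<Longrightarrow> \<pi> x = \<pi> y \<Longrightarrow> x = y"
    and "\<And>v. v \<in> {1..m} \<Longrightarrow> \<exists>x\<in>{1..m}. \<pi> x = v"
    and "\<And>x. x \<in> {1..m} \<Longrightarrow> even x \<Longrightarrow> \<pi> x < x"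
    and "\<And>x. x \<in> {1..m} \<Longrightarrow> odd x \<Longrightarrow> x \<le> \<pi> x"
    and "av m \<pi>"
proof -
  have p: "\<pi> permutes {1..m}" and d: "\<forall>x\<in>{1..m}. (even x \<longrightarrow> \<pi> x < x) \<and> (odd x \<longrightarrow> x \<le> \<pi> x)"
    and a: "av m \<pi>" using assms unfolding B_def D_def by auto
  show "\<And>x. x \<in> {1..m} \<Longrightarrow> \<pi> x \<in> {1..m}" using permutes_image[OF p] by blast
  show "\<And>x. x \<notin> {1..m} \<Longrightarrow> \<pi> x = x" using permutes_not_in[OF p] by blast
  show i: "inj_on \<pi> {1..m}" using permutes_inj_on[OF p] .
  show "\<And>x y. x \<in> {1..m} \<Longrightarrow> y \<in> {1..m} \<Longrightarrow> \<pi> x = \<pi> y \<Longrightarrow> x = y" using i by (meson inj_onD)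
  show "\<And>v. v \<in> {1..m} \<Longrightarrow> \<exists>x\<in>{1..m}. \<pi> x = v" using permutes_image[OF p] by (metis imageE)
  show "\<And>x. x \<in> {1..m} \<Longrightarrow> even x \<Longrightarrow> \<pi> x < x" using d by blast
  show "\<And>x. x \<in> {1..m} \<Longrightarrow> odd x \<Longrightarrow> x \<le> \<pi> x" using d by blast
  show "av m \<pi>" using a .
qed

lemma BI:
  assumes "\<And>x. x \<notin> {1..m} \<Longrightarrow> \<pi> x = x"
    and "\<And>x. x \<in> {1..m} \<Longrightarrow> \<pi> x \<in> {1..m}"
    and "inj_on \<pi> {1..m}"
    and "\<And>x. x \<in> {1..m} \<Longrightarrow> even x \<Longrightarrow> \<pi> x < x"
    and "\<And>x. x \<in> {1..m} \<Longrightarrow> odd x \<Longrightarrow> x \<le> \<pi> x"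
    and "av m \<pi>"
  shows "\<pi> \<in> B m"
proof -
  have "\<pi> permutes {1..m}" using assms(1-3) by (subst perm_iff) auto
  then show ?thesis using assms unfolding B_def D_def by auto
qed

lemma av_iso:
  assumes "av m \<pi>" "\<And>a b. a \<in> {1..m} \<Longrightarrow> b \<in> {1..m} \<Longrightarrow> (\<sigma> a < \<sigma> b \<longleftrightarrow> \<pi> a < \<pi> b)"
  shows "av m \<sigma>"
  unfolding av_def
proof (intro allI impI notI)
  fix i j k assume h: "1 \<le> i" "i < j" "j < k" "k \<le> m" "\<sigma> k < \<sigma> i \<and> \<sigma> i < \<sigma> j"
  have "i \<in> {1..m}" "j \<in> {1..m}" "k \<in> {1..m}" using h by auto
  then have "\<pi> k < \<pi> i \<and> \<pi> i < \<pi> j" using h(5) assms(2) by blast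
  with assms(1) h(1-4) show False unfolding av_def by blast
qed

lemma av_mono: "av m' \<pi> \<Longrightarrow> m \<le> m' \<Longrightarrow> av m \<pi>"
  unfolding av_def by (meson le_trans)

lemma c3: "(x::nat) \<in> {1..m+2} \<Longrightarrow> x \<in> {1..m} \<or> x = m+1 \<or> x = m+2" by auto

lemma L_ext1:
  assumes "even m" "\<sigma> \<in> B m"
  shows "ext1 m \<sigma> \<in> B (m+2)"
proof -
  note F = Bfacts[OF assms(2)]
  let ?f = "ext1 m \<sigma>"
  have f1: "?f (m+1) = m+2" "?f (m+2) = m+1" unfolding ext1_def by auto
  have f0: "?f x = \<sigma> x" if "x \<in> {1..m}" for x using that unfolding ext1_def by auto
  have bd: "?f x \<le> m+2" if xr: "x \<in> {1..m+2}" for x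
  proof -
    consider "x \<in> {1..m}" | "x = m+1" | "x = m+2" using xr by fastforce
    then show ?thesis using f0 f1 F(1) by cases fastforce+
  qed
  show ?thesis
  proof (rule BI)
    show "?f x = x" if "x \<notin> {1..m+2}" for x using that F(2)[of x] unfolding ext1_def by auto
    show "?f x \<in> {1..m+2}" if xr: "x \<in> {1..m+2}" for x
    proof -
      consider "x \<in> {1..m}" | "x = m+1" | "x = m+2" using xr by fastforce
      then show ?thesis using f0 f1 F(1)[of x] by cases auto
    qed
    show "inj_on ?f {1..m+2}"
    proof (rule inj_onI)
      fix x y assume x: "x \<in> {1..m+2}" and y: "y \<in> {1..m+2}" and e: "?f x = ?f y"
      have lx: "?f x \<le> m \<longleftrightarrow> x \<le> m" using c3[OF x] f0[of x] f1 F(1)[of x] by (elim disjE) auto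
      have ly: "?f y \<le> m \<longleftrightarrow> y \<le> m" using c3[OF y] f0[of y] f1 F(1)[of y] by (elim disjE) auto
      show "x = y"
      proof (cases "x \<le> m")
        case True
        then have "y \<le> m" using lx ly e by simp
        then show ?thesis using True x y e f0[of x] f0[of y] F(4)[of x y] by simp
      next
        case False
        then have "y > m" using lx ly e by simp
        then have "x = m+1 \<or> x = m+2" "y = m+1 \<or> y = m+2" using False x y by auto
        then show ?thesis using e f1 by auto
      qed
    qed
    show "?f x < x" if xr: "x \<in> {1..m+2}" "even x" for x
    proof -
      consider "x \<in> {1..m}" | "x = m+1" | "x = m+2" using xr by fastforce
      then show ?thesis using f0 f1 F(6)[of x] xr assms(1) by cases auto
    qed
    show "x \<le> ?f x" if xr: "x \<in> {1..m+2}" "odd x" for x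
    proof -
      consider "x \<in> {1..m}" | "x = m+1" | "x = m+2" using xr by fastforce
      then show ?thesis using f0 f1 F(7)[of x] xr assms(1) by cases auto
    qed
    show "av (m+2) ?f" unfolding av_def
    proof (intro allI impI notI)
      fix i j k assume h: "1 \<le> i" "i < j" "j < k" "k \<le> m+2" "?f k < ?f i \<and> ?f i < ?f j"
      have bi: "?f i \<le> m+2" "?f j \<le> m+2" using bd h by auto
      consider "k \<le> m" | "k = m+1" | "k = m+2" using h by fastforce
      then show False
      proof cases
        case 1
        then have "i \<in> {1..m}" "j \<in> {1..m}" "k \<in> {1..m}" using h by auto
        then have "\<sigma> k < \<sigma> i \<and> \<sigma> i < \<sigma> j" using h(5) f0 by metis
        then show False using F(8) h 1 unfolding av_def by (meson le_trans less_imp_le)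
      next
        case 2
        then show False using h(5) f1 bi by auto
      next
        case 3
        then have "j \<le> m+1" using h by auto
        then have "?f j \<le> m+2" "?f i \<ge> m+2" using h(5) f1 3 bi by auto
        moreover have "?f j \<noteq> m+2 \<or> j = m+1" using f0 F(1)[of j] h by (cases "j \<le> m") auto
        ultimately show False using h f1 by auto
      qed
    qed
  qed
qed

lemma L_ext2:
  assumes "even m" "m \<ge> 2" "\<sigma> \<in> B m"
  shows "ext2 m \<sigma> \<in> B (m+2)"
proof -
  note F = Bfacts[OF assms(3)]
  let ?f = "ext2 m \<sigma>"
  have f1: "?f (m+1) = m+1" "?f (m+2) = m" unfolding ext2_def by auto
  have f0: "?f x = (if \<sigma> x = m then m+2 else \<sigma> x)" if "x \<in> {1..m}" for x using that unfolding ext2_def by auto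
  have v0: "?f x \<in> {1..m-1} \<union> {m+2}" if xr: "x \<in> {1..m}" for x
    using f0[OF xr] F(1)[OF xr] by (cases "\<sigma> x = m") auto
  have iso: "?f a < ?f b \<longleftrightarrow> \<sigma> a < \<sigma> b" if "a \<in> {1..m}" "b \<in> {1..m}" for a b
    using f0[OF that(1)] f0[OF that(2)] F(1)[OF that(1)] F(1)[OF that(2)] by auto
  have bd: "?f x \<le> m+2" if xr: "x \<in> {1..m+2}" for x
    using c3[OF xr] v0[of x] f1 by (elim disjE) auto
  show ?thesis
  proof (rule BI)
    show "?f x = x" if "x \<notin> {1..m+2}" for x using that F(2)[of x] assms(2) unfolding ext2_def by auto
    show "?f x \<in> {1..m+2}" if xr: "x \<in> {1..m+2}" for x
      using c3[OF xr] v0[of x] f1 assms(2) by (elim disjE) auto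
    show "inj_on ?f {1..m+2}"
    proof (rule inj_onI)
      fix x y assume x: "x \<in> {1..m+2}" and y: "y \<in> {1..m+2}" and e: "?f x = ?f y"
      show "x = y"
      proof (cases "x \<le> m")
        case True
        then have xm: "x \<in> {1..m}" using x by auto
        show ?thesis
        proof (cases "y \<le> m")
          case True
          then have "y \<in> {1..m}" using y by auto
          then show ?thesis using xm e f0[of x] f0[of y] F(4)[of x y] F(4)[of x] F(1)[of x] F(1)[of y]
            by (auto split: if_splits)
        next
          case False
          then have "y = m+1 \<or> y = m+2" using y by auto
          then show ?thesis using v0[OF xm] e f1 by auto
        qed
      next
        case False
        then have xx: "x = m+1 \<or> x = m+2" using x by auto
        show ?thesis
        proof (cases "y \<le> m")
          case True
          then have "y \<in> {1..m}" using y by auto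
          then show ?thesis using xx v0[of y] e f1 by auto
        next
          case False
          then have "y = m+1 \<or> y = m+2" using y by auto
          then show ?thesis using xx e f1 by auto
        qed
      qed
    qed
    show "?f x < x" if xr: "x \<in> {1..m+2}" "even x" for x
    proof -
      consider "x \<in> {1..m}" | "x = m+1" | "x = m+2" using c3[OF xr(1)] by blast
      then show ?thesis
      proof cases
        case 1
        then show ?thesis using f0[OF 1] F(6)[OF 1 xr(2)] by auto
      qed (use f1 xr assms(1) in auto)
    qed
    show "x \<le> ?f x" if xr: "x \<in> {1..m+2}" "odd x" for x
    proof -
      consider "x \<in> {1..m}" | "x = m+1" | "x = m+2" using c3[OF xr(1)] by blast
      then show ?thesis
      proof cases
        case 1
        then show ?thesis using f0[OF 1] F(7)[OF 1 xr(2)] by auto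
      qed (use f1 xr assms(1) in auto)
    qed
    show "av (m+2) ?f" unfolding av_def
    proof (intro allI impI notI)
      fix i j k assume h: "1 \<le> i" "i < j" "j < k" "k \<le> m+2" "?f k < ?f i \<and> ?f i < ?f j"
      have bi: "?f i \<le> m+2" "?f j \<le> m+2" using bd h by auto
      consider "k \<le> m" | "k = m+1" | "k = m+2" using h by fastforce
      then show False
      proof cases
        case 1
        then have r: "i \<in> {1..m}" "j \<in> {1..m}" "k \<in> {1..m}" using h by auto
        then have "\<sigma> k < \<sigma> i \<and> \<sigma> i < \<sigma> j" using h(5) iso by metis
        then show False using F(8) h 1 unfolding av_def by (meson le_trans less_imp_le)
      next
        case 2
        then show False using h(5) f1 bi by auto
      next
        case 3
        then have "?f i = m+1" using h(5) f1 bi by auto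
        moreover have "i \<le> m+1" using h 3 by auto
        ultimately have "i = m+1" using v0[of i] h(1) by (cases "i \<le> m") auto
        then show False using h 3 by auto
      qed
    qed
  qed
qed

lemma inv1: "\<sigma> \<in> B m \<Longrightarrow> red1 m (ext1 m \<sigma>) = \<sigma>"
  using Bfacts(2)[of \<sigma> m "m+1"] Bfacts(2)[of \<sigma> m "m+2"] unfolding red1_def ext1_def
  by (auto simp: fun_eq_iff)

lemma inv2:
  assumes "\<sigma> \<in> B m" shows "red2 m (ext2 m \<sigma>) = \<sigma>"
proof
  fix x
  note F = Bfacts[OF assms]
  show "red2 m (ext2 m \<sigma>) x = \<sigma> x"
  proof (cases "x \<in> {1..m}")
    case True
    then show ?thesis using F(1)[OF True] unfolding red2_def ext2_def by auto
  next
    case False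
    then show ?thesis using F(2)[OF False] unfolding red2_def ext2_def by auto
  qed
qed

lemma L_cases:
  assumes "\<pi> \<in> B (m+2)" "even m"
  shows "\<pi> (m+1) = m+2 \<or> \<pi> (m+1) = m+1"
proof -
  note F = Bfacts[OF assms(1)]
  have r: "m+1 \<in> {1..m+2}" by auto
  show ?thesis using F(1)[OF r] F(7)[OF r] F(6)[OF r] using assms(2) by auto
qed

lemma L_red1:
  assumes "even m" "\<pi> \<in> B (m+2)" "\<pi> (m+1) = m+2"
  shows "red1 m \<pi> \<in> B m \<and> ext1 m (red1 m \<pi>) = \<pi>"
proof -
  note F = Bfacts[OF assms(2)]
  have rN: "m+2 \<in> {1..m+2}" and rN1: "m+1 \<in> {1..m+2}" by auto
  have lt: "\<pi> (m+2) < m+2" using F(6)[OF rN] assms(1) by auto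
  have ne: "\<pi> (m+2) \<noteq> m+2" using lt by auto
  have vN: "\<pi> (m+2) = m+1"
  proof (rule ccontr)
    assume c: "\<pi> (m+2) \<noteq> m+1"
    obtain q where q: "q \<in> {1..m+2}" "\<pi> q = m+1" using F(5)[of "m+1"] by auto
    have "q \<noteq> m+1" "q \<noteq> m+2" using q assms(3) c by auto
    then have "q < m+1" "1 \<le> q" using q by auto
    moreover have "\<pi> (m+2) < \<pi> q" "\<pi> q < \<pi> (m+1)" using q c lt assms(3) by auto
    moreover have "1 \<le> q \<longrightarrow> q < m+1 \<longrightarrow> m+1 < m+2 \<longrightarrow> m+2 \<le> m+2 \<longrightarrow> \<not> (\<pi> (m+2) < \<pi> q \<and> \<pi> q < \<pi> (m+1))"
      using F(8) unfolding av_def by blast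
    ultimately show False by auto
  qed
  let ?g = "red1 m \<pi>"
  have g0: "?g x = \<pi> x" if "x \<in> {1..m}" for x using that unfolding red1_def by auto
  have "?g \<in> B m"
  proof (rule BI)
    show "?g x = x" if "x \<notin> {1..m}" for x using that F(2)[of x] unfolding red1_def by auto
    show "?g x \<in> {1..m}" if xr: "x \<in> {1..m}" for x
    proof -
      have "x \<in> {1..m+2}" using xr by auto
      then have "\<pi> x \<in> {1..m+2}" by (rule F(1))
      moreover have "\<pi> x \<noteq> m+1" "\<pi> x \<noteq> m+2" using F(4)[of x "m+2"] F(4)[of x "m+1"] xr vN assms(3) by auto
      ultimately show ?thesis using g0[OF xr] by auto
    qed
    show "inj_on ?g {1..m}"
      by (rule inj_onI) (use g0 F(4) in fastforce)
    show "?g x < x" if xr: "x \<in> {1..m}" "even x" for x using g0[OF xr(1)] F(6)[of x] xr by auto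
    show "x \<le> ?g x" if xr: "x \<in> {1..m}" "odd x" for x using g0[OF xr(1)] F(7)[of x] xr by auto
    show "av m ?g" using av_mono[OF F(8), of m] by (rule av_iso) (auto simp: g0)
  qed
  moreover have "ext1 m ?g = \<pi>" using vN assms(3) unfolding ext1_def red1_def by (auto simp: fun_eq_iff)
  ultimately show ?thesis by blast
qed

lemma L_red2:
  assumes "even m" "\<pi> \<in> B (m+2)" "\<pi> (m+1) = m+1"
  shows "m \<ge> 2 \<and> red2 m \<pi> \<in> B m \<and> ext2 m (red2 m \<pi>) = \<pi>"
proof -
  note F = Bfacts[OF assms(2)]
  have rN: "m+2 \<in> {1..m+2}" and rN1: "m+1 \<in> {1..m+2}" by auto
  have lt: "\<pi> (m+2) < m+2" using F(6)[OF rN] assms(1) by auto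
  have ne: "\<pi> (m+2) \<noteq> m+1" using F(4)[OF rN rN1] assms(3) by auto
  have ge: "\<pi> (m+2) \<ge> 1" using F(1)[OF rN] by auto
  have m2: "m \<ge> 2" using lt ne ge assms(1) by presburger
  have vN: "\<pi> (m+2) = m"
  proof (rule ccontr)
    assume c: "\<pi> (m+2) \<noteq> m"
    obtain q where q: "q \<in> {1..m+2}" "\<pi> q = m" using F(5)[of "m"] m2 by auto
    have "q \<noteq> m+1" "q \<noteq> m+2" using q assms(3) c by auto
    then have "q < m+1" "1 \<le> q" using q by auto
    moreover have "\<pi> (m+2) < \<pi> q" "\<pi> q < \<pi> (m+1)" using q c lt ne assms(3) by auto
    moreover have "1 \<le> q \<longrightarrow> q < m+1 \<longrightarrow> m+1 < m+2 \<longrightarrow> m+2 \<le> m+2 \<longrightarrow> \<not> (\<pi> (m+2) < \<pi> q \<and> \<pi> q < \<pi> (m+1))"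
      using F(8) unfolding av_def by blast
    ultimately show False by auto
  qed
  let ?g = "red2 m \<pi>"
  have g0: "?g x = (if \<pi> x = m+2 then m else \<pi> x)" if "x \<in> {1..m}" for x using that unfolding red2_def by auto
  have pv: "\<pi> x \<in> {1..m+2} \<and> \<pi> x \<noteq> m \<and> \<pi> x \<noteq> m+1" if xr: "x \<in> {1..m}" for x
  proof -
    have "x \<in> {1..m+2}" using xr by auto
    then have "\<pi> x \<in> {1..m+2}" by (rule F(1))
    moreover have "\<pi> x \<noteq> m+1" "\<pi> x \<noteq> m" using F(4)[of x "m+2"] F(4)[of x "m+1"] xr vN assms(3) by auto
    ultimately show ?thesis by auto
  qed
  have "?g \<in> B m"
  proof (rule BI)
    show "?g x = x" if "x \<notin> {1..m}" for x using that F(2)[of x] unfolding red2_def by auto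
    show "?g x \<in> {1..m}" if xr: "x \<in> {1..m}" for x
      using g0[OF xr] pv[OF xr] m2 by auto
    show "inj_on ?g {1..m}"
    proof (rule inj_onI)
      fix x y assume x: "x \<in> {1..m}" and y: "y \<in> {1..m}" and e: "?g x = ?g y"
      have "\<pi> x = \<pi> y" using e g0[OF x] g0[OF y] pv[OF x] pv[OF y] by (auto split: if_splits)
      then show "x = y" using F(4)[of x y] x y by auto
    qed
    show "?g x < x" if xr: "x \<in> {1..m}" "even x" for x
      using g0[OF xr(1)] F(6)[of x] xr by auto
    show "x \<le> ?g x" if xr: "x \<in> {1..m}" "odd x" for x
      using g0[OF xr(1)] F(7)[of x] xr by auto
    show "av m ?g" using av_mono[OF F(8), of m]
    proof (rule av_iso)
      fix a b assume a: "a \<in> {1..m}" and b: "b \<in> {1..m}"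
      show "?g a < ?g b \<longleftrightarrow> \<pi> a < \<pi> b" using g0[OF a] g0[OF b] pv[OF a] pv[OF b] by auto
    qed auto
  qed
  moreover have "ext2 m ?g = \<pi>"
  proof
    fix x
    show "ext2 m ?g x = \<pi> x"
    proof (cases "x = m+1 \<or> x = m+2")
      case True then show ?thesis using vN assms(3) unfolding ext2_def red2_def by auto
    next
      case False
      have "\<pi> x \<noteq> m" using F(4)[of x "m+2"] vN False F(2)[of x] m2 by (cases "x \<in> {1..m+2}") auto
      then show ?thesis using False unfolding ext2_def red2_def by auto
    qed
  qed
  ultimately show ?thesis using m2 by blast
qed

lemma finB: "finite (B m)"
  by (rule finite_subset[OF _ finite_permutations[of "{1..m}"]]) (auto simp: B_def D_def)

lemma B0: "B 0 = {id}"
  unfolding B_def D_def av_def by auto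

lemma cardB2: "card (B 2) = 1"
proof -
  have "B (0+2) = ext1 0 ` B 0"
  proof
    show "ext1 0 ` B 0 \<subseteq> B (0+2)" using L_ext1[of 0] by auto
    show "B (0+2) \<subseteq> ext1 0 ` B 0"
    proof
      fix \<pi> assume p: "\<pi> \<in> B (0+2)"
      from L_cases[OF p] show "\<pi> \<in> ext1 0 ` B 0"
      proof
        assume "\<pi> (0+1) = 0+2"
        then show ?thesis using L_red1[OF _ p] by (metis even_zero image_eqI)
      next
        assume "\<pi> (0+1) = 0+1"
        then show ?thesis using L_red2[OF _ p] by auto
      qed simp
    qed
  qed
  then show ?thesis using B0 by (simp add: numeral_2_eq_2)
qed

lemma cardB_step:
  assumes "even m" "m \<ge> 2"
  shows "card (B (m+2)) = 2 * card (B m)"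
proof -
  have eq: "B (m+2) = ext1 m ` B m \<union> ext2 m ` B m"
  proof
    show "ext1 m ` B m \<union> ext2 m ` B m \<subseteq> B (m+2)" using L_ext1[OF assms(1)] L_ext2[OF assms] by auto
    show "B (m+2) \<subseteq> ext1 m ` B m \<union> ext2 m ` B m"
    proof
      fix \<pi> assume p: "\<pi> \<in> B (m+2)"
      from L_cases[OF p assms(1)] show "\<pi> \<in> ext1 m ` B m \<union> ext2 m ` B m"
      proof
        assume "\<pi> (m+1) = m+2"
        then have "red1 m \<pi> \<in> B m \<and> ext1 m (red1 m \<pi>) = \<pi>" using L_red1[OF assms(1) p] by blast
        then show ?thesis by (metis UnI1 image_eqI)
      next
        assume "\<pi> (m+1) = m+1"
        then have "red2 m \<pi> \<in> B m \<and> ext2 m (red2 m \<pi>) = \<pi>" using L_red2[OF assms(1) p] by blast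
        then show ?thesis by (metis UnI2 image_eqI)
      qed
    qed
  qed
  have i1: "inj_on (ext1 m) (B m)" by (rule inj_on_inverseI[where g = "red1 m"]) (rule inv1)
  have i2: "inj_on (ext2 m) (B m)" by (rule inj_on_inverseI[where g = "red2 m"]) (rule inv2)
  have dj: "ext1 m ` B m \<inter> ext2 m ` B m = {}"
    unfolding ext1_def ext2_def by (auto dest!: fun_cong[where x = "m+2"])
  have "card (B (m+2)) = card (ext1 m ` B m) + card (ext2 m ` B m)"
    unfolding eq by (rule card_Un_disjoint) (use finB dj in auto)
  also have "\<dots> = 2 * card (B m)" using card_image[OF i1] card_image[OF i2] by simp
  finally show ?thesis .
qed

lemma cardB: "card (B (2*k+2)) = 2 ^ k"
proof (induction k)
  case 0 then show ?case using cardB2 by (simp add: numeral_2_eq_2)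
next
  case (Suc k)
  have "2 * Suc k + 2 = (2*k+2) + 2" by simp
  then have "card (B (2 * Suc k + 2)) = 2 * card (B (2*k+2))"
    using cardB_step[of "2*k+2"] by simp
  then show ?case using Suc by simp
qed

theorem theorem2p2:
  fixes n :: nat
  assumes "n \<ge> 1"
  shows "card {\<pi> \<in> dumont2 n. avoids_pattern \<pi> (2*n) pat231 3} = 2 ^ (n - 1)"
proof -
  have e: "2*n = 2*(n-1)+2" using assms by simp
  have "{\<pi> \<in> dumont2 n. avoids_pattern \<pi> (2*n) pat231 3} = B (2*n)"
    unfolding dumont_eq avoid_eq B_def by auto
  also have "\<dots> = B (2*(n-1)+2)" using e by simp
  finally show ?thesis using cardB[of "n-1"] by (simp only:)
qed

end
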